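(* Let $E$ be a topological space such that (i) $E$ has a countable basis of open sets, and (ii) for every closed subset $F$ of $E$, the intersection of countably many $\mathbf{\Pi}^0_2(E)$ subsets of $F$ each of which is dense in $F$ is dense in $F$. Then $\bigcup_{\alpha<\aleph_1}\mathbf{D}_\alpha(E)=\mathbf{\Delta}^0_2(E)$.
   Context: $\mathbf{\Sigma}^0_2(E)$: countable unions of sets $U\setminus V$ with $U,V$ open in $E$; $\mathbf{\Pi}^0_2(E)$: complements of $\mathbf{\Sigma}^0_2(E)$ sets; $\mathbf{\Delta}^0_2(E)=\mathbf{\Sigma}^0_2(E)\cap\mathbf{\Pi}^0_2(E)$. Parity of ordinals: every ordinal is uniquely $\lambda+n$ with $\lambda$ zero or limit and $n<\omega$; its parity is that of $n$; $\alpha\sim\beta$ means same parity. For an ordinal $\alpha$ and a sequence $(A_\beta)_{\beta<\alpha}$ of subsets of $E$, $D_\alpha((A_\beta)_{\beta<\alpha})=\bigcup_{\beta<\alpha,\ \beta\not\sim\alpha}\big(A_\beta\setminus\bigcup_{\gamma<\beta}A_\gamma\big)$. $\mathbf{D}_\alpha(E)$ is the class of all sets $D_\alpha((A_\beta)_{\beta<\alpha})$ with every $A_\beta$ open in $E$. $\aleph_1$ denotes the first uncountable ordinal. *)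

theory Defs
  imports "HOL-Analysis.Analysis"
begin

definition Sigma02 :: "'a::topological_space set set" where
  "Sigma02 = {S. \<exists>U V :: nat \<Rightarrow> 'a set. (\<forall>n. open (U n) \<and> open (V n)) \<and> S = (\<Union>n. U n - V n)}"

definition Pi02 :: "'a::topological_space set set" where
  "Pi02 = {S. - S \<in> Sigma02}"

definition Delta02 :: "'a::topological_space set set" where
  "Delta02 = Sigma02 \<inter> Pi02"

text \<open>Ordinals are represented by well-orders r (the ordinal is the order type of r);
  an ordinal beta < alpha is an element b of Field r, with order type that of underS r b.
  An element x is "zero or limit" if the set of its strict predecessors has no maximum.\<close>

definition is_lim_elem :: "'i rel \<Rightarrow> 'i \<Rightarrow> bool" where
  "is_lim_elem r x \<longleftrightarrow> x \<in> Field r \<and> \<not> (\<exists>y\<in>underS r x. \<forall>z\<in>underS r x. (z, y) \<in> r)"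

text \<open>If the order type is lambda + n (lambda zero or limit), the elements y after which
  no limit element occurs are exactly lambda, ..., lambda+n-1 (for n > 0); when n = 0 this
  set is empty or infinite. Hence the ordinal is odd iff this set is finite of odd size.\<close>

definition fin_part :: "'i rel \<Rightarrow> 'i set" where
  "fin_part r = {y \<in> Field r. \<forall>z \<in> aboveS r y. \<not> is_lim_elem r z}"

definition ord_odd :: "'i rel \<Rightarrow> bool" where
  "ord_odd r \<longleftrightarrow> finite (fin_part r) \<and> odd (card (fin_part r))"

definition Dop :: "'i rel \<Rightarrow> ('i \<Rightarrow> 'a set) \<Rightarrow> 'a set" where
  "Dop r A = \<Union>{A b - \<Union>{A c | c. c \<in> underS r b} | b.
      b \<in> Field r \<and> ord_odd (Restr r (underS r b)) \<noteq> ord_odd r}"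

definition Dclass :: "'i rel \<Rightarrow> 'a::topological_space set set" where
  "Dclass r = {Dop r A | A. \<forall>b\<in>Field r. open (A b)}"

end

theory Submission
  imports Defs
begin


lemma Sigma02_I:
  fixes U V :: "nat \<Rightarrow> 'a::topological_space set"
  assumes "\<And>n. open (U n)" "\<And>n. open (V n)" "S = (\<Union>n. U n - V n)"
  shows "S \<in> Sigma02"
  unfolding Sigma02_def
  apply (rule CollectI)
  apply (rule exI[where x=U])
  apply (rule exI[where x=V])
  using assms by simp

lemma Sigma02_UN:
  fixes U V :: "'i \<Rightarrow> 'a::topological_space set"
  assumes "countable B" "\<And>b. b \<in> B \<Longrightarrow> open (U b) \<and> open (V b)"
  shows "(\<Union>b\<in>B. U b - V b) \<in> Sigma02"
proof (cases "B = {}")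
  case True
  show ?thesis by (rule Sigma02_I[of "\<lambda>n. {}" "\<lambda>n. {}"]) (use True in auto)
next
  case False
  define e where "e = from_nat_into B"
  have r: "range e = B" using False assms(1) unfolding e_def by simp
  have "(\<Union>b\<in>B. U b - V b) = (\<Union>b\<in>range e. U b - V b)" using r by simp
  also have "\<dots> = (\<Union>n. U (e n) - V (e n))" by simp
  finally have eq: "(\<Union>b\<in>B. U b - V b) = (\<Union>n. U (e n) - V (e n))" .
  have "\<And>n. open (U (e n))" "\<And>n. open (V (e n))"
    using assms(2) r by auto
  then show ?thesis by (rule Sigma02_I) (rule eq)
qed

lemma Sigma02_Un:
  fixes X Y :: "'a::topological_space set"
  assumes "X \<in> Sigma02" "Y \<in> Sigma02"
  shows "X \<union> Y \<in> Sigma02"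
proof -
  obtain U V :: "nat \<Rightarrow> 'a set" where UV: "\<forall>n. open (U n) \<and> open (V n)" "X = (\<Union>n. U n - V n)"
    using assms(1) unfolding Sigma02_def by blast
  obtain U' V' :: "nat \<Rightarrow> 'a set" where UV': "\<forall>n. open (U' n) \<and> open (V' n)" "Y = (\<Union>n. U' n - V' n)"
    using assms(2) unfolding Sigma02_def by blast
  let ?U = "\<lambda>b::bool\<times>nat. if fst b then U (snd b) else U' (snd b)"
  let ?V = "\<lambda>b::bool\<times>nat. if fst b then V (snd b) else V' (snd b)"
  have "X \<union> Y = (\<Union>b\<in>UNIV. ?U b - ?V b)"
  proof (intro equalityI subsetI)
    fix x assume "x \<in> X \<union> Y"
    then show "x \<in> (\<Union>b\<in>UNIV. ?U b - ?V b)"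
    proof
      assume "x \<in> X" then obtain n where "x \<in> U n - V n" using UV by blast
      then show ?thesis by (intro UN_I[of "(True, n)"]) auto
    next
      assume "x \<in> Y" then obtain n where "x \<in> U' n - V' n" using UV' by blast
      then show ?thesis by (intro UN_I[of "(False, n)"]) auto
    qed
  next
    fix x assume "x \<in> (\<Union>b\<in>UNIV. ?U b - ?V b)"
    then obtain b where "x \<in> ?U b - ?V b" by blast
    then show "x \<in> X \<union> Y" unfolding UV UV' by (cases "fst b") auto
  qed
  moreover have "(\<Union>b\<in>UNIV. ?U b - ?V b) \<in> Sigma02"
    by (rule Sigma02_UN) (auto simp: UV UV')
  ultimately show ?thesis by simp
qed

lemma Dop_alt: "Dop r A = (\<Union>b\<in>{b\<in>Field r. ord_odd (Restr r (underS r b)) \<noteq> ord_odd r}. A b - \<Union>(A ` underS r b))"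
  unfolding Dop_def by (simp only: setcompr_eq_image Collect_mem_eq)

lemma Dclass_sub:
  fixes A :: "nat \<Rightarrow> 'a::topological_space set"
  assumes wo: "Well_order (r::nat rel)" and op: "\<forall>b\<in>Field r. open (A b)"
  shows "Dop r A \<in> Delta02"
proof -
  define P where "P b \<longleftrightarrow> ord_odd (Restr r (underS r b)) \<noteq> ord_odd r" for b
  define W where "W b = \<Union>(A ` underS r b)" for b
  have Wop: "open (W b)" for b
    unfolding W_def using op by (auto intro!: open_Union dest: FieldI1 simp: underS_def)
  have D: "Dop r A = (\<Union>b\<in>{b\<in>Field r. P b}. A b - W b)"
    unfolding Dop_alt P_def W_def by simp
  have wf: "wf (r - Id)" and tot: "total_on (Field r) r"
    using wo by (auto simp: well_order_on_def linear_order_on_def)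
  have C: "- Dop r A = (UNIV - (\<Union>b\<in>Field r. A b)) \<union> (\<Union>b\<in>{b\<in>Field r. \<not> P b}. A b - W b)"
  proof (intro equalityI subsetI)
    fix x assume x: "x \<in> - Dop r A"
    show "x \<in> (UNIV - (\<Union>b\<in>Field r. A b)) \<union> (\<Union>b\<in>{b\<in>Field r. \<not> P b}. A b - W b)"
    proof (cases "\<exists>b\<in>Field r. x \<in> A b")
      case True
      then obtain b where b: "b \<in> Field r" "x \<in> A b" by blast
      obtain z where z: "z \<in> {b\<in>Field r. x \<in> A b}"
        and m: "\<And>y. (y, z) \<in> r - Id \<Longrightarrow> y \<notin> {b\<in>Field r. x \<in> A b}"
        using wfE_min[OF wf, of b "{b\<in>Field r. x \<in> A b}"] b by blast
      have "x \<notin> A c" if "c \<in> underS r z" for c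
      proof -
        have "(c, z) \<in> r - Id" "c \<in> Field r" using that by (auto simp: underS_def intro: FieldI1)
        then show ?thesis using m by blast
      qed
      then have "x \<notin> W z" unfolding W_def by blast
      have "\<not> P z"
      proof
        assume "P z"
        then have "x \<in> (\<Union>b\<in>{b\<in>Field r. P b}. A b - W b)" using z \<open>x \<notin> W z\<close> by blast
        then have "x \<in> Dop r A" unfolding D .
        then show False using x by simp
      qed
      then show ?thesis using z \<open>x \<notin> W z\<close> by blast
    qed blast
  next
    fix x assume x: "x \<in> (UNIV - (\<Union>b\<in>Field r. A b)) \<union> (\<Union>b\<in>{b\<in>Field r. \<not> P b}. A b - W b)"
    show "x \<in> - Dop r A"
    proof
      assume "x \<in> Dop r A"
      then have "x \<in> (\<Union>b\<in>{b\<in>Field r. P b}. A b - W b)" unfolding D .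
      then obtain b' where b': "b' \<in> Field r" "P b'" "x \<in> A b'" "x \<notin> W b'" by blast
      then obtain b where b: "b \<in> Field r" "\<not> P b" "x \<in> A b" "x \<notin> W b" using x by blast
      have "b \<noteq> b'" using b b' by blast
      then have "(b, b') \<in> r \<or> (b', b) \<in> r" using tot b b' by (auto simp: total_on_def)
      then show False using b b' unfolding W_def underS_def using \<open>b \<noteq> b'\<close> by blast
    qed
  qed
  have s1: "Dop r A \<in> Sigma02"
    unfolding D by (rule Sigma02_UN) (auto simp: Wop op)
  have s2: "(\<Union>b\<in>{b\<in>Field r. \<not> P b}. A b - W b) \<in> Sigma02"
    by (rule Sigma02_UN) (auto simp: Wop op)
  have s3: "(UNIV - (\<Union>b\<in>Field r. A b)) \<in> Sigma02"
    using Sigma02_UN[of "{0::nat}" "\<lambda>_. UNIV" "\<lambda>_. (\<Union>b\<in>Field r. A b)"] op by auto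
  have "- Dop r A \<in> Sigma02" unfolding C by (rule Sigma02_Un[OF s3 s2])
  then show ?thesis using s1 unfolding Delta02_def Pi02_def by blast
qed



inductive_set tower :: "('a set \<Rightarrow> 'a set) \<Rightarrow> 'a set set" for f where
  tw_Inter: "(\<forall>X\<in>S. X \<in> tower f) \<Longrightarrow> \<Inter>S \<in> tower f"
| tw_Step: "X \<in> tower f \<Longrightarrow> f X \<in> tower f"

lemma tower_Mc:
  assumes sub: "\<And>X. f X \<subseteq> X" and ext: "\<forall>x\<in>tower f. c \<subset> x \<longrightarrow> c \<subseteq> f x"
    and x: "x \<in> tower f"
  shows "c \<subseteq> x \<or> x \<subseteq> f c"
  using x
proof induction
  case (tw_Inter S)
  show ?case
  proof (cases "\<forall>s\<in>S. c \<subseteq> s")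
    case True
    then show ?thesis by blast
  next
    case False
    then obtain s where s: "s \<in> S" "\<not> c \<subseteq> s" by blast
    with tw_Inter.IH have "s \<subseteq> f c" by blast
    then show ?thesis using s by blast
  qed
next
  case (tw_Step x)
  show ?case
  proof (cases "x \<subseteq> f c")
    case True
    then show ?thesis using sub[of x] by blast
  next
    case False
    then have cx: "c \<subseteq> x" using tw_Step.IH by blast
    show ?thesis
    proof (cases "c = x")
      case True then show ?thesis by blast
    next
      case False
      then have "c \<subset> x" using cx by blast
      then show ?thesis using ext tw_Step.hyps by blast
    qed
  qed
qed

lemma tower_extreme:
  assumes sub: "\<And>X. f X \<subseteq> X" and c: "c \<in> tower f"
  shows "\<forall>x\<in>tower f. c \<subset> x \<longrightarrow> c \<subseteq> f x"
  using c
proof induction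
  case (tw_Step c)
  show ?case
  proof (intro ballI impI)
    fix x assume x: "x \<in> tower f" and lt: "f c \<subset> x"
    have "c \<subseteq> x \<or> x \<subseteq> f c" using tower_Mc[OF sub tw_Step.IH x] .
    then have cx: "c \<subseteq> x" using lt by blast
    show "f c \<subseteq> f x"
    proof (cases "c = x")
      case True then show ?thesis by simp
    next
      case False
      then have "c \<subseteq> f x" using cx tw_Step.IH x by blast
      then show ?thesis using sub[of c] by blast
    qed
  qed
next
  case (tw_Inter S)
  show ?case
  proof (intro ballI impI)
    fix x assume x: "x \<in> tower f" and lt: "\<Inter>S \<subset> x"
    then obtain c where c: "c \<in> S" "\<not> x \<subseteq> c" by blast
    have ext: "\<forall>y\<in>tower f. c \<subset> y \<longrightarrow> c \<subseteq> f y" using tw_Inter.IH c(1) by blast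
    have "c \<subseteq> x \<or> x \<subseteq> f c" using tower_Mc[OF sub ext x] .
    then have "c \<subseteq> x" using c(2) sub[of c] by blast
    then have "c \<subset> x" using c(2) by blast
    then have "c \<subseteq> f x" using ext x by blast
    then show "\<Inter>S \<subseteq> f x" using c(1) by blast
  qed
qed

lemma tower_cmp:
  assumes sub: "\<And>X. f X \<subseteq> X" and "c \<in> tower f" "x \<in> tower f"
  shows "c \<subseteq> x \<or> x \<subseteq> f c"
  using tower_Mc[OF sub tower_extreme[OF sub assms(2)] assms(3)] .

lemma tower_chain:
  assumes sub: "\<And>X. f X \<subseteq> X" and "c \<in> tower f" "x \<in> tower f"
  shows "c \<subseteq> x \<or> x \<subseteq> c"
  using tower_cmp[OF assms] sub[of c] by blast

lemma tower_first:
  assumes sub: "\<And>X. f X \<subseteq> X" and fix0: "\<And>X. X \<in> tower f \<Longrightarrow> f X = X \<Longrightarrow> X = {}"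
    and P: "P \<subseteq> tower f" "P \<noteq> {}"
  shows "\<exists>F\<in>P. \<forall>G\<in>P. G \<subseteq> F"
proof -
  define M where "M = {M \<in> tower f. \<forall>X\<in>P. X \<subseteq> M}"
  define T0 where "T0 = \<Inter>M"
  have T0: "T0 \<in> tower f" unfolding T0_def M_def by (rule tw_Inter) blast
  have up: "X \<subseteq> T0" if "X \<in> P" for X using that unfolding T0_def M_def by blast
  show ?thesis
  proof (cases "T0 \<in> P")
    case True then show ?thesis using up by blast
  next
    case False
    have "X \<subseteq> f T0" if X: "X \<in> P" for X
    proof -
      have "T0 \<subseteq> X \<or> X \<subseteq> f T0" using tower_cmp[OF sub T0] X P(1) by blast
      moreover have "X \<noteq> T0" using X False by blast
      ultimately show ?thesis using up[OF X] by blast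
    qed
    then have "f T0 \<in> M" unfolding M_def using tw_Step[OF T0] by blast
    then have "T0 \<subseteq> f T0" unfolding T0_def by blast
    then have "f T0 = T0" using sub[of T0] by blast
    then have "T0 = {}" using fix0 T0 by blast
    obtain X where X: "X \<in> P" using P(2) by blast
    then have "X = {}" using up \<open>T0 = {}\<close> by blast
    then show ?thesis using False \<open>T0 = {}\<close> X by simp
  qed
qed

lemma tower_point:
  assumes sub: "\<And>X. f X \<subseteq> X" and fix0: "\<And>X. X \<in> tower f \<Longrightarrow> f X = X \<Longrightarrow> X = {}"
  shows "\<exists>F\<in>tower f. x \<in> F \<and> x \<notin> f F"
proof -
  define F where "F = \<Inter>{G\<in>tower f. x \<in> G}"
  have F: "F \<in> tower f" unfolding F_def by (rule tw_Inter) blast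
  have xF: "x \<in> F" unfolding F_def by blast
  have low: "F \<subseteq> G" if "G \<in> tower f" "x \<in> G" for G unfolding F_def using that by blast
  have "x \<notin> f F"
  proof
    assume "x \<in> f F"
    then have "F \<subseteq> f F" using low tw_Step[OF F] by blast
    then have "f F = F" using sub[of F] by blast
    then show False using fix0[OF F] xF by blast
  qed
  then show ?thesis using F xF by blast
qed



lemma dir_mem:
  assumes inj: "inj_on g (Field R)" and a: "a \<in> Field R" and b: "b \<in> Field R"
  shows "(g a, g b) \<in> dir_image R g \<longleftrightarrow> (a, b) \<in> R"
proof
  assume "(g a, g b) \<in> dir_image R g"
  then obtain a' b' where ab: "(a', b') \<in> R" "g a = g a'" "g b = g b'"
    unfolding dir_image_def by blast
  have "a' \<in> Field R" "b' \<in> Field R" using ab(1) by (auto intro: FieldI1 FieldI2)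
  then have "a = a'" "b = b'" using ab inj a b unfolding inj_on_def by auto
  then show "(a, b) \<in> R" using ab by simp
qed (auto simp: dir_image_def)

lemma dir_elem:
  assumes "(u, v) \<in> dir_image R g"
  obtains a b where "(a, b) \<in> R" "u = g a" "v = g b"
  using assms unfolding dir_image_def by blast

lemma dir_Field_elem:
  assumes "u \<in> Field (dir_image R g)"
  obtains a where "a \<in> Field R" "u = g a"
  using assms by (auto simp: dir_image_Field)

lemma dir_underS:
  assumes inj: "inj_on g (Field R)" and x: "x \<in> Field R"
  shows "underS (dir_image R g) (g x) = g ` underS R x"
proof (intro equalityI subsetI)
  fix u assume u: "u \<in> underS (dir_image R g) (g x)"
  then have "(u, g x) \<in> dir_image R g" "u \<noteq> g x" by (auto simp: underS_def)
  then obtain a where a: "a \<in> Field R" "u = g a"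
    by (metis dir_Field_elem FieldI1)
  then have "(a, x) \<in> R" "a \<noteq> x" using dir_mem[OF inj a(1) x] \<open>(u, g x) \<in> dir_image R g\<close> \<open>u \<noteq> g x\<close> by auto
  then show "u \<in> g ` underS R x" using a by (auto simp: underS_def)
next
  fix u assume "u \<in> g ` underS R x"
  then obtain a where a: "a \<in> underS R x" "u = g a" by blast
  then have af: "a \<in> Field R" "(a, x) \<in> R" "a \<noteq> x" by (auto simp: underS_def intro: FieldI1)
  then have "g a \<noteq> g x" using inj x unfolding inj_on_def by blast
  then show "u \<in> underS (dir_image R g) (g x)" using af a dir_mem[OF inj af(1) x] by (auto simp: underS_def)
qed

lemma dir_aboveS:
  assumes inj: "inj_on g (Field R)" and x: "x \<in> Field R"
  shows "aboveS (dir_image R g) (g x) = g ` aboveS R x"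
proof (intro equalityI subsetI)
  fix u assume u: "u \<in> aboveS (dir_image R g) (g x)"
  then have "(g x, u) \<in> dir_image R g" "u \<noteq> g x" by (auto simp: aboveS_def)
  then obtain a where a: "a \<in> Field R" "u = g a"
    by (metis dir_Field_elem FieldI2)
  then have "(x, a) \<in> R" "a \<noteq> x" using dir_mem[OF inj x a(1)] \<open>(g x, u) \<in> dir_image R g\<close> \<open>u \<noteq> g x\<close> by auto
  then show "u \<in> g ` aboveS R x" using a by (auto simp: aboveS_def)
next
  fix u assume "u \<in> g ` aboveS R x"
  then obtain a where a: "a \<in> aboveS R x" "u = g a" by blast
  then have af: "a \<in> Field R" "(x, a) \<in> R" "a \<noteq> x" by (auto simp: aboveS_def intro: FieldI2)
  then have "g a \<noteq> g x" using inj x unfolding inj_on_def by blast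
  then show "u \<in> aboveS (dir_image R g) (g x)" using af a dir_mem[OF inj x af(1)] by (auto simp: aboveS_def)
qed

lemma dir_lim:
  assumes inj: "inj_on g (Field R)" and x: "x \<in> Field R"
  shows "is_lim_elem (dir_image R g) (g x) \<longleftrightarrow> is_lim_elem R x"
proof -
  have F: "g x \<in> Field (dir_image R g)" using x by (simp add: dir_image_Field)
  have U: "underS (dir_image R g) (g x) = g ` underS R x" by (rule dir_underS[OF inj x])
  have sub: "underS R x \<subseteq> Field R" by (auto simp: underS_def intro: FieldI1)
  have "(\<exists>y\<in>underS (dir_image R g) (g x). \<forall>z\<in>underS (dir_image R g) (g x). (z, y) \<in> dir_image R g)
     \<longleftrightarrow> (\<exists>y\<in>underS R x. \<forall>z\<in>underS R x. (z, y) \<in> R)"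
    unfolding U using sub dir_mem[OF inj] by (auto simp: subset_iff)
  then show ?thesis unfolding is_lim_elem_def using F x by simp
qed

lemma dir_fin_part:
  assumes inj: "inj_on g (Field R)"
  shows "fin_part (dir_image R g) = g ` fin_part R"
proof (intro equalityI subsetI)
  fix u assume u: "u \<in> fin_part (dir_image R g)"
  then have uF: "u \<in> Field (dir_image R g)" unfolding fin_part_def by blast
  then obtain a where a: "a \<in> Field R" "u = g a" by (rule dir_Field_elem)
  have "\<not> is_lim_elem R z" if z: "z \<in> aboveS R a" for z
  proof -
    have zF: "z \<in> Field R" using z by (auto simp: aboveS_def intro: FieldI2)
    have "g z \<in> aboveS (dir_image R g) u" using z a dir_aboveS[OF inj a(1)] by simp
    then have "\<not> is_lim_elem (dir_image R g) (g z)" using u unfolding fin_part_def by blast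
    then show ?thesis using dir_lim[OF inj zF] by simp
  qed
  then show "u \<in> g ` fin_part R" using a unfolding fin_part_def by blast
next
  fix u assume "u \<in> g ` fin_part R"
  then obtain a where a: "a \<in> fin_part R" "u = g a" by blast
  then have aF: "a \<in> Field R" unfolding fin_part_def by blast
  have "\<not> is_lim_elem (dir_image R g) w" if w: "w \<in> aboveS (dir_image R g) u" for w
  proof -
    obtain z where z: "z \<in> aboveS R a" "w = g z" using w a dir_aboveS[OF inj aF] by auto
    have zF: "z \<in> Field R" using z by (auto simp: aboveS_def intro: FieldI2)
    have "\<not> is_lim_elem R z" using a z unfolding fin_part_def by blast
    then show ?thesis using dir_lim[OF inj zF] z by simp
  qed
  moreover have "u \<in> Field (dir_image R g)" using aF a by (simp add: dir_image_Field)
  ultimately show "u \<in> fin_part (dir_image R g)" unfolding fin_part_def by blast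
qed

lemma dir_ord_odd:
  assumes inj: "inj_on g (Field R)"
  shows "ord_odd (dir_image R g) \<longleftrightarrow> ord_odd R"
proof -
  have sub: "fin_part R \<subseteq> Field R" unfolding fin_part_def by blast
  then have inj2: "inj_on g (fin_part R)" using inj inj_on_subset by blast
  show ?thesis unfolding ord_odd_def dir_fin_part[OF inj]
    using inj2 by (simp add: finite_image_iff card_image)
qed

lemma dir_Restr:
  assumes inj: "inj_on g (Field R)" and X: "X \<subseteq> Field R"
  shows "Restr (dir_image R g) (g ` X) = dir_image (Restr R X) g"
proof (intro equalityI subsetI)
  fix p assume p: "p \<in> Restr (dir_image R g) (g ` X)"
  then obtain a b where ab: "(a, b) \<in> R" "p = (g a, g b)" by (auto elim: dir_elem)
  have "a \<in> Field R" "b \<in> Field R" using ab(1) by (auto intro: FieldI1 FieldI2)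
  moreover have "g a \<in> g ` X" "g b \<in> g ` X" using p ab by auto
  ultimately have "a \<in> X" "b \<in> X" using inj X unfolding inj_on_def by blast+
  then show "p \<in> dir_image (Restr R X) g" using ab unfolding dir_image_def by blast
qed (auto simp: dir_image_def)

lemma dir_Restr_underS_odd:
  assumes inj: "inj_on g (Field R)" and x: "x \<in> Field R"
  shows "ord_odd (Restr (dir_image R g) (underS (dir_image R g) (g x))) \<longleftrightarrow> ord_odd (Restr R (underS R x))"
proof -
  have sub: "underS R x \<subseteq> Field R" by (auto simp: underS_def intro: FieldI1)
  have inj2: "inj_on g (Field (Restr R (underS R x)))"
    using inj inj_on_subset[of g "Field R"] mono_Field[of "Restr R (underS R x)" R] by blast
  show ?thesis unfolding dir_underS[OF inj x] dir_Restr[OF inj sub] dir_ord_odd[OF inj2] ..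
qed

lemma dir_Dop:
  assumes inj: "inj_on g (Field R)"
  shows "Dop (dir_image R g) A = Dop R (A \<circ> g)"
proof -
  have "Dop (dir_image R g) A = (\<Union>b\<in>{b\<in>Field (dir_image R g). ord_odd (Restr (dir_image R g) (underS (dir_image R g) b)) \<noteq> ord_odd (dir_image R g)}. A b - \<Union>(A ` underS (dir_image R g) b))"
    by (rule Dop_alt)
  also have "{b\<in>Field (dir_image R g). ord_odd (Restr (dir_image R g) (underS (dir_image R g) b)) \<noteq> ord_odd (dir_image R g)}
     = g ` {b\<in>Field R. ord_odd (Restr R (underS R b)) \<noteq> ord_odd R}"
    using dir_Restr_underS_odd[OF inj] dir_ord_odd[OF inj] by (auto simp: dir_image_Field)
  also have "(\<Union>b\<in>g ` {b\<in>Field R. ord_odd (Restr R (underS R b)) \<noteq> ord_odd R}. A b - \<Union>(A ` underS (dir_image R g) b))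
      = (\<Union>b\<in>{b\<in>Field R. ord_odd (Restr R (underS R b)) \<noteq> ord_odd R}. (A \<circ> g) b - \<Union>((A \<circ> g) ` underS R b))"
    using dir_underS[OF inj] by (simp add: image_comp)
  also have "\<dots> = Dop R (A \<circ> g)" by (rule Dop_alt[symmetric])
  finally show ?thesis .
qed



definition lexle :: "'b set \<times> nat \<Rightarrow> 'b set \<times> nat \<Rightarrow> bool" where
  "lexle p q \<longleftrightarrow> fst q \<subset> fst p \<or> (fst p = fst q \<and> snd p \<le> snd q)"

lemma fin_part_up:
  assumes tr: "trans R" and an: "antisym R" and y: "y \<in> fin_part R" and z: "z \<in> aboveS R y"
  shows "z \<in> fin_part R"
proof -
  have zF: "z \<in> Field R" using z by (auto simp: aboveS_def intro: FieldI2)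
  have yz: "(y, z) \<in> R" "z \<noteq> y" using z by (auto simp: aboveS_def)
  have "w \<in> aboveS R y" if w: "w \<in> aboveS R z" for w
  proof -
    have zw: "(z, w) \<in> R" "w \<noteq> z" using w by (auto simp: aboveS_def)
    have "(y, w) \<in> R" using tr yz zw unfolding trans_def by blast
    moreover have "w \<noteq> y"
    proof
      assume "w = y"
      then have "(z, y) \<in> R" using zw by simp
      then show False using an yz unfolding antisym_def by blast
    qed
    ultimately show ?thesis by (simp add: aboveS_def)
  qed
  then show ?thesis using y zF unfolding fin_part_def by blast
qed

locale lexchain =
  fixes TT :: "'b set set"
  assumes chain: "\<And>F G. F \<in> TT \<Longrightarrow> G \<in> TT \<Longrightarrow> F \<subseteq> G \<or> G \<subseteq> F"
    and first: "\<And>P. P \<subseteq> TT \<Longrightarrow> P \<noteq> {} \<Longrightarrow> \<exists>F\<in>P. \<forall>G\<in>P. G \<subseteq> F"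
begin

definition II :: "('b set \<times> nat) set" where "II = TT \<times> UNIV"

definition RR :: "('b set \<times> nat) rel" where
  "RR = {(p, q). p \<in> II \<and> q \<in> II \<and> lexle p q}"

lemma II_mem: "p \<in> II \<longleftrightarrow> fst p \<in> TT"
  unfolding II_def by (cases p) auto

lemma RR_iff: "(p, q) \<in> RR \<longleftrightarrow> p \<in> II \<and> q \<in> II \<and> lexle p q"
  by (simp add: RR_def)

lemma lexle_refl: "lexle p p" by (simp add: lexle_def)

lemma Field_RR: "Field RR = II"
proof (intro equalityI subsetI)
  fix x assume "x \<in> Field RR" then show "x \<in> II"
    by (auto simp: Field_def RR_def)
next
  fix x assume "x \<in> II" then have "(x, x) \<in> RR" by (simp add: RR_iff lexle_refl)
  then show "x \<in> Field RR" by (rule FieldI1)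
qed

lemma lexle_trans: "lexle p q \<Longrightarrow> lexle q s \<Longrightarrow> lexle p s"
  unfolding lexle_def by auto

lemma lexle_antisym: "lexle p q \<Longrightarrow> lexle q p \<Longrightarrow> p = q"
  unfolding lexle_def by (cases p; cases q) auto

lemma lexle_total:
  assumes "p \<in> II" "q \<in> II" shows "lexle p q \<or> lexle q p"
proof -
  obtain F i G j where pq: "p = (F, i)" "q = (G, j)" by (cases p; cases q)
  have "F \<in> TT" "G \<in> TT" using assms pq by (auto simp: II_def)
  then have c: "F \<subseteq> G \<or> G \<subseteq> F" by (rule chain)
  show ?thesis
  proof (cases "F = G")
    case True then show ?thesis using pq by (auto simp: lexle_def)
  next
    case False then show ?thesis using c pq by (auto simp: lexle_def)
  qed
qed

lemma trans_RR: "trans RR"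
  unfolding trans_def RR_iff using lexle_trans by blast

lemma antisym_RR: "antisym RR"
  unfolding antisym_def RR_iff using lexle_antisym by blast

lemma wf_RR: "wf (RR - Id)"
proof (rule wfI_min)
  fix x :: "'b set \<times> nat" and Q assume xQ: "x \<in> Q"
  show "\<exists>z\<in>Q. \<forall>y. (y, z) \<in> RR - Id \<longrightarrow> y \<notin> Q"
  proof (cases "Q \<inter> II = {}")
    case True
    then have "x \<notin> II" using xQ by blast
    show ?thesis
    proof (rule bexI[of _ x])
      show "\<forall>y. (y, x) \<in> RR - Id \<longrightarrow> y \<notin> Q" using \<open>x \<notin> II\<close> by (simp add: RR_iff)
    qed (rule xQ)
  next
    case False
    define P where "P = fst ` (Q \<inter> II)"
    have "P \<subseteq> TT" unfolding P_def II_def by auto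
    moreover have "P \<noteq> {}" using False unfolding P_def by blast
    ultimately have "\<exists>F\<in>P. \<forall>G\<in>P. G \<subseteq> F" by (rule first)
    then obtain F0 where F0: "F0 \<in> P" "\<And>G. G \<in> P \<Longrightarrow> G \<subseteq> F0" by blast
    obtain p where p: "p \<in> Q \<inter> II" "F0 = fst p" using F0(1) unfolding P_def by blast
    then have k: "(F0, snd p) \<in> Q \<inter> II" by simp
    define k0 where "k0 = (LEAST k. (F0, k) \<in> Q \<inter> II)"
    have k0: "(F0, k0) \<in> Q \<inter> II" unfolding k0_def using k by (rule LeastI)
    have "y \<notin> Q" if y: "(y, (F0, k0)) \<in> RR - Id" for y
    proof
      assume yQ: "y \<in> Q"
      have yI: "y \<in> II" and le: "lexle y (F0, k0)" and ne: "y \<noteq> (F0, k0)" using y by (auto simp: RR_iff)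
      have "fst y \<in> P" using yQ yI unfolding P_def by blast
      then have sub: "fst y \<subseteq> F0" using F0(2) by blast
      obtain G i where yG: "y = (G, i)" by (cases y)
      have "\<not> F0 \<subset> G" using sub yG by auto
      then have "G = F0" "i \<le> k0" using le yG unfolding lexle_def by auto
      then have "fst y = F0" "snd y < k0" using ne yG by auto
      then have "(F0, snd y) \<in> Q \<inter> II" using yQ yI yG by simp
      then have "k0 \<le> snd y" unfolding k0_def by (rule Least_le)
      then show False using \<open>snd y < k0\<close> by simp
    qed
    then show ?thesis using k0 by (intro bexI[of _ "(F0, k0)"]) auto
  qed
qed

lemma WO_RR: "Well_order RR"
  unfolding well_order_on_def linear_order_on_def partial_order_on_def preorder_on_def
proof (intro conjI)
  show "RR \<subseteq> Field RR \<times> Field RR" by (auto intro: FieldI1 FieldI2)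
  show "refl_on (Field RR) RR" unfolding refl_on_def Field_RR by (simp add: RR_iff lexle_refl)
  show "trans RR" by (rule trans_RR)
  show "antisym RR" by (rule antisym_RR)
  show "total_on (Field RR) RR" unfolding total_on_def Field_RR RR_iff using lexle_total by blast
  show "wf (RR - Id)" by (rule wf_RR)
qed

lemma not_odd_RR: "\<not> ord_odd RR"
proof
  assume "ord_odd RR"
  then have fin: "finite (fin_part RR)" and "card (fin_part RR) \<noteq> 0" unfolding ord_odd_def by auto
  then have "fin_part RR \<noteq> {}" by (metis card.empty)
  then obtain y where y: "y \<in> fin_part RR" by blast
  then have yI: "y \<in> II" unfolding fin_part_def Field_RR by blast
  have "(fst y, j) \<in> fin_part RR" if "j > snd y" for j
  proof (rule fin_part_up[OF trans_RR antisym_RR y])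
    show "(fst y, j) \<in> aboveS RR y" using that yI
      by (cases y) (auto simp: aboveS_def RR_iff II_def lexle_def)
  qed
  then have "(\<lambda>j. (fst y, j)) ` {snd y<..} \<subseteq> fin_part RR" by blast
  moreover have "infinite ((\<lambda>j. (fst y, j)) ` {snd y<..})"
    by (subst finite_image_iff) (auto simp: inj_on_def infinite_Ioi)
  ultimately show False using fin finite_subset by blast
qed

lemma seg_fin_part:
  assumes F: "F \<in> TT" and k: "k \<ge> 1"
  shows "fin_part (Restr RR (underS RR (F, k))) = (\<lambda>j. (F, j)) ` {..<k}"
proof -
  let ?b = "(F, k)"
  define U where "U = underS RR ?b"
  define R' where "R' = Restr RR U"
  have U_iff: "p \<in> U \<longleftrightarrow> p \<in> II \<and> lexle p ?b \<and> p \<noteq> ?b" for p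
    unfolding U_def using F by (auto simp: underS_def RR_iff II_def)
  have R_iff: "(p, q) \<in> R' \<longleftrightarrow> p \<in> U \<and> q \<in> U \<and> lexle p q" for p q
    unfolding R'_def using U_iff by (auto simp: RR_iff)
  have FR: "Field R' = U"
  proof (intro equalityI subsetI)
    fix x assume "x \<in> Field R'" then show "x \<in> U" unfolding R'_def by (auto simp: Field_def)
  next
    fix x assume "x \<in> U" then have "(x, x) \<in> R'" using R_iff lexle_refl by blast
    then show "x \<in> Field R'" by (rule FieldI1)
  qed
  have uS: "p \<in> underS R' z \<longleftrightarrow> p \<in> U \<and> z \<in> U \<and> lexle p z \<and> p \<noteq> z" for p z
    unfolding underS_def mem_Collect_eq R_iff by blast
  have aS: "p \<in> aboveS R' z \<longleftrightarrow> p \<in> U \<and> z \<in> U \<and> lexle z p \<and> p \<noteq> z" for p z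
    unfolding aboveS_def mem_Collect_eq R_iff by blast
  have "fin_part R' = (\<lambda>j. (F, j)) ` {..<k}"
  proof (intro equalityI subsetI)
    fix y assume y: "y \<in> fin_part R'"
    then have yU: "y \<in> U" unfolding fin_part_def FR by blast
    obtain G i where yGi: "y = (G, i)" by (cases y)
    have GT: "G \<in> TT" using yU U_iff yGi by (auto simp: II_def)
    have le: "lexle (G, i) (F, k)" "(G, i) \<noteq> (F, k)" using yU U_iff yGi by auto
    show "y \<in> (\<lambda>j. (F, j)) ` {..<k}"
    proof (cases "G = F")
      case True
      then show ?thesis using le yGi by (auto simp: lexle_def)
    next
      case False
      then have FG: "F \<subset> G" using le by (auto simp: lexle_def)
      let ?z = "(F, 0::nat)"
      have zU: "?z \<in> U" using F k by (auto simp: U_iff II_def lexle_def)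
      have "?z \<in> aboveS R' y" using zU yU FG yGi by (auto simp: aS lexle_def)
      moreover have "is_lim_elem R' ?z"
        unfolding is_lim_elem_def FR
      proof (intro conjI zU notI)
        assume "\<exists>y'\<in>underS R' ?z. \<forall>w\<in>underS R' ?z. (w, y') \<in> R'"
        then obtain y' where y': "y' \<in> underS R' ?z" and mx: "\<And>w. w \<in> underS R' ?z \<Longrightarrow> (w, y') \<in> R'" by blast
        obtain G' i' where y'G: "y' = (G', i')" by (cases y')
        have y'U: "y' \<in> U" and y'z: "lexle y' ?z" "y' \<noteq> ?z" using y' uS by auto
        have FG': "F \<subset> G'" using y'z y'G by (auto simp: lexle_def)
        have G'T: "G' \<in> TT" using y'U y'G U_iff by (auto simp: II_def)
        have wU: "(G', Suc i') \<in> U" using G'T FG' by (auto simp: U_iff II_def lexle_def)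
        have "(G', Suc i') \<in> underS R' ?z" using wU zU FG' by (auto simp: uS lexle_def)
        then have "((G', Suc i'), y') \<in> R'" by (rule mx)
        then show False using y'G by (auto simp: R_iff lexle_def)
      qed
      ultimately show ?thesis using y unfolding fin_part_def by blast
    qed
  next
    fix y assume "y \<in> (\<lambda>j. (F, j)) ` {..<k}"
    then obtain j where j: "j < k" "y = (F, j)" by blast
    have yU: "y \<in> U" using j F by (auto simp: U_iff II_def lexle_def)
    have "\<not> is_lim_elem R' z" if z: "z \<in> aboveS R' y" for z
    proof -
      obtain G i where zG: "z = (G, i)" by (cases z)
      have zU: "z \<in> U" and yz: "lexle y z" "z \<noteq> y" using z aS by auto
      have zb: "lexle z ?b" "z \<noteq> ?b" using zU U_iff by auto
      have GF: "G = F" and ji: "j < i" "i < k" using yz zb zG j by (auto simp: lexle_def)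
      let ?y' = "(F, i - 1)"
      have y'U: "?y' \<in> U" using ji F by (auto simp: U_iff II_def lexle_def)
      have y'u: "?y' \<in> underS R' z" using y'U zU zG GF ji by (auto simp: uS lexle_def)
      have "(w, ?y') \<in> R'" if w: "w \<in> underS R' z" for w
      proof -
        have wU: "w \<in> U" and wz: "lexle w z" "w \<noteq> z" using w uS by auto
        have "lexle w ?y'" using wz zG GF ji by (cases w) (auto simp: lexle_def)
        then show ?thesis using wU y'U R_iff by blast
      qed
      then show ?thesis using y'u unfolding is_lim_elem_def by blast
    qed
    then show "y \<in> fin_part R'" using yU FR unfolding fin_part_def by blast
  qed
then show ?thesis unfolding R'_def U_def .
qed

lemma seg_card:
  assumes F: "F \<in> TT" and k: "k \<ge> 1"
  shows "ord_odd (Restr RR (underS RR (F, k))) \<longleftrightarrow> odd k"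
proof -
  have "inj_on (\<lambda>j. (F, j)) {..<k}" by (auto simp: inj_on_def)
  then have "card ((\<lambda>j. (F, j)) ` {..<k}) = k" by (simp add: card_image)
  then show ?thesis unfolding ord_odd_def seg_fin_part[OF F k] by simp
qed

end



lemma Dop_cong:
  assumes "\<And>b. b \<in> Field R \<Longrightarrow> f b = f' b"
  shows "Dop R f = Dop R f'"
proof -
  have u: "underS R b \<subseteq> Field R" for b by (auto simp: underS_def intro: FieldI1)
  have "(\<Union>b\<in>{b\<in>Field R. ord_odd (Restr R (underS R b)) \<noteq> ord_odd R}. f b - \<Union>(f ` underS R b))
      = (\<Union>b\<in>{b\<in>Field R. ord_odd (Restr R (underS R b)) \<noteq> ord_odd R}. f' b - \<Union>(f' ` underS R b))"
  proof (rule SUP_cong[OF refl])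
    fix b assume "b \<in> {b\<in>Field R. ord_odd (Restr R (underS R b)) \<noteq> ord_odd R}"
    then have "f b = f' b" using assms by blast
    moreover have "f ` underS R b = f' ` underS R b" using assms u by (intro image_cong) auto
    ultimately show "f b - \<Union>(f ` underS R b) = f' b - \<Union>(f' ` underS R b)" by simp
  qed
  then show ?thesis unfolding Dop_alt .
qed

lemma closed_Sigma02: "closed (F::'a::topological_space set) \<Longrightarrow> - F \<in> Sigma02"
  by (rule Sigma02_I[of "\<lambda>n. - F" "\<lambda>n. {}"]) (auto simp: open_Compl)

lemma baire_Delta:
  fixes S :: "'a::second_countable_topology set"
  assumes H: "\<And>(F :: 'a set) (G :: nat \<Rightarrow> 'a set).
             closed F \<Longrightarrow> (\<forall>n. G n \<in> Pi02 \<and> G n \<subseteq> F \<and> F \<subseteq> closure (G n))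
             \<Longrightarrow> F \<subseteq> closure (\<Inter>n. G n)"
    and S: "S \<in> Delta02" and F: "closed F" and d1: "F \<subseteq> closure (F \<inter> S)" and d2: "F \<subseteq> closure (F - S)"
  shows "F = {}"
proof -
  define G where "G n = (if even n then F \<inter> S else F - S)" for n :: nat
  have cF: "- F \<in> Sigma02" using F by (rule closed_Sigma02)
  have S1: "S \<in> Sigma02" and S2: "- S \<in> Sigma02" using S unfolding Delta02_def Pi02_def by auto
  have "F \<inter> S \<in> Pi02" unfolding Pi02_def using Sigma02_Un[OF cF S2] by (simp add: Compl_Int)
  moreover have "F - S \<in> Pi02" unfolding Pi02_def using Sigma02_Un[OF cF S1] by (simp add: Diff_eq Compl_Int)
  ultimately have "\<forall>n. G n \<in> Pi02 \<and> G n \<subseteq> F \<and> F \<subseteq> closure (G n)"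
    using d1 d2 unfolding G_def by auto
  then have "F \<subseteq> closure (\<Inter>n. G n)" using H F by blast
  moreover have "(\<Inter>n. G n) = {}"
  proof -
    have "(\<Inter>n. G n) \<subseteq> G 0 \<inter> G 1" by blast
    also have "\<dots> = {}" unfolding G_def by auto
    finally show ?thesis by blast
  qed
  ultimately show ?thesis by simp
qed

lemma main_incl:
  fixes S :: "'a::second_countable_topology set"
  assumes baire: "\<And>F. closed F \<Longrightarrow> F \<subseteq> closure (F \<inter> S) \<Longrightarrow> F \<subseteq> closure (F - S) \<Longrightarrow> F = {}"
  shows "\<exists>r::nat rel. Well_order r \<and> S \<in> Dclass r"
proof -
  define D where "D F = F \<inter> closure (F \<inter> S) \<inter> closure (F - S)" for F
  have sub: "D X \<subseteq> X" for X unfolding D_def by blast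
  define T where "T = tower D"
  have closedT: "closed X" if "X \<in> T" for X
    using that unfolding T_def
  proof induction
    case (tw_Inter S) then show ?case by (intro closed_Inter) blast
  next
    case (tw_Step X) then show ?case unfolding D_def by (intro closed_Int closed_closure)
  qed
  have fix0: "X = {}" if "X \<in> tower D" "D X = X" for X
  proof -
    have h1: "X \<subseteq> closure (X \<inter> S)" using that(2) sub[of X] unfolding D_def by blast
    have h2: "X \<subseteq> closure (X - S)" using that(2) unfolding D_def by blast
    have "X \<in> T" using that(1) by (simp add: T_def)
    then have "closed X" by (rule closedT)
    then show ?thesis using h1 h2 by (rule baire)
  qed
  define TT where "TT = T - {{}}"
  have lc: "lexchain TT"
  proof
    fix F G assume "F \<in> TT" "G \<in> TT"
    then have "F \<in> tower D" "G \<in> tower D" unfolding TT_def T_def by auto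
    then show "F \<subseteq> G \<or> G \<subseteq> F" by (rule tower_chain[OF sub])
  next
    fix P assume P: "P \<subseteq> TT" "P \<noteq> {}"
    then have PT: "P \<subseteq> tower D" unfolding TT_def T_def by auto
    show "\<exists>F\<in>P. \<forall>G\<in>P. G \<subseteq> F" by (rule tower_first[where f=D, OF sub fix0 PT P(2)])
  qed
  interpret lexchain TT by (rule lc)
  have cmp: "F \<subseteq> G \<or> G \<subseteq> D F" if "F \<in> T" "G \<in> T" for F G
    using tower_cmp[OF sub, of F G] that unfolding T_def by blast
  have DT: "D F \<in> T" if "F \<in> T" for F using that unfolding T_def by (rule tw_Step)
  obtain B :: "'a set set" where B: "countable B" "topological_basis B"
    using ex_countable_basis by blast
  have exb: "\<exists>b. b \<in> B \<and> b \<inter> F \<noteq> {} \<and> b \<inter> D F = {}" if F: "F \<in> TT" for F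
  proof -
    have FT: "F \<in> T" "F \<noteq> {}" using F unfolding TT_def by auto
    have "D F \<noteq> F"
    proof
      assume "D F = F"
      moreover have "F \<in> tower D" using FT(1) by (simp add: T_def)
      ultimately have "F = {}" using fix0 by blast
      then show False using FT(2) by simp
    qed
    then obtain x where x: "x \<in> F" "x \<notin> D F" using sub[of F] by blast
    have "open (- D F)" using closedT[OF DT[OF FT(1)]] by (simp add: open_Compl)
    then obtain b where "b \<in> B" "x \<in> b" "b \<subseteq> - D F" using x topological_basisE[OF B(2)] by blast
    then show ?thesis using x by blast
  qed
  define phi where "phi F = (SOME b. b \<in> B \<and> b \<inter> F \<noteq> {} \<and> b \<inter> D F = {})" for F
  have phi: "phi F \<in> B" "phi F \<inter> F \<noteq> {}" "phi F \<inter> D F = {}" if "F \<in> TT" for F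
    using someI_ex[OF exb[OF that]] unfolding phi_def by blast+
  have "inj_on phi TT"
  proof (rule inj_onI)
    fix F G assume F: "F \<in> TT" and G: "G \<in> TT" and eq: "phi F = phi G"
    have FT: "F \<in> T" and GT: "G \<in> T" using F G unfolding TT_def by auto
    show "F = G"
    proof (rule ccontr)
      assume ne: "F \<noteq> G"
      have "F \<subseteq> G \<or> G \<subseteq> F" using tower_chain[OF sub] FT GT unfolding T_def by blast
      then show False
      proof
        assume "F \<subseteq> G"
        then have "F \<subseteq> D G" using cmp[OF GT FT] ne by blast
        then show False using phi[OF F] phi[OF G] eq by blast
      next
        assume "G \<subseteq> F"
        then have "G \<subseteq> D F" using cmp[OF FT GT] ne by blast
        then show False using phi[OF F] phi[OF G] eq by blast
      qed
    qed
  qed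
  moreover have "phi ` TT \<subseteq> B" using phi(1) by blast
  then have "countable (phi ` TT)" using B(1) by (rule countable_subset)
  ultimately have cTT: "countable TT" using countable_image_inj_on by blast
  have cII: "countable II" using cTT by (simp add: II_def)
  define g where "g = to_nat_on II"
  have inj: "inj_on g (Field RR)" unfolding Field_RR g_def using cII by (simp add: inj_on_to_nat_on)
  define Aw where "Aw p = (if snd p = 1 then - closure (fst p - S) else if snd p = 2 then - D (fst p) else {})" for p :: "'a set \<times> nat"
  define A' where "A' n = Aw (from_nat_into II n)" for n
  have Ag: "(A' \<circ> g) p = Aw p" if "p \<in> II" for p
    unfolding A'_def g_def using that cII by simp
  have IIT: "fst p \<in> T" "fst p \<noteq> {}" if "p \<in> II" for p
  proof -
    have "fst p \<in> TT" using that by (simp add: II_mem)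
    then show "fst p \<in> T" "fst p \<noteq> {}" unfolding TT_def by auto
  qed
  have Aw_open: "open (Aw p)" if "p \<in> II" for p
    using closedT[OF DT[OF IIT(1)[OF that]]] unfolding Aw_def by (auto simp: open_Compl)
  have odd1: "ord_odd (Restr RR (underS RR (F, 1)))" if "F \<in> TT" for F
    using seg_card[OF that, of 1] by simp
  have odd2: "\<not> ord_odd (Restr RR (underS RR (F, 2)))" if "F \<in> TT" for F
    using seg_card[OF that, of 2] by simp
  have notodd: "\<not> ord_odd RR" by (rule not_odd_RR)
  let ?X = "{b\<in>Field RR. ord_odd (Restr RR (underS RR b)) \<noteq> ord_odd RR}"
  have DopS: "Dop RR Aw = S"
  proof -
    have "Dop RR Aw = (\<Union>b\<in>?X. Aw b - \<Union>(Aw ` underS RR b))" by (rule Dop_alt)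
    also have "\<dots> = S"
    proof (intro equalityI subsetI)
      fix x assume "x \<in> (\<Union>b\<in>?X. Aw b - \<Union>(Aw ` underS RR b))"
      then obtain b where bX: "b \<in> ?X" and bx: "x \<in> Aw b - \<Union>(Aw ` underS RR b)" by blast
      have b1: "b \<in> II" "ord_odd (Restr RR (underS RR b))" using bX notodd Field_RR by auto
      have b3: "x \<in> Aw b" "x \<notin> \<Union>(Aw ` underS RR b)" using bx by auto
      obtain F k where bF: "b = (F, k)" by (cases b)
      have FTT: "F \<in> TT" using b1 bF by (simp add: II_mem)
      have k1: "k = 1"
      proof (rule ccontr)
        assume "k \<noteq> 1"
        then have "k = 2" using b3(1) bF by (auto simp: Aw_def split: if_splits)
        then show False using odd2[OF FTT] b1(2) bF by simp
      qed
      have xc: "x \<notin> closure (F - S)" using b3(1) bF k1 by (simp add: Aw_def)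
      have FT: "F \<in> T" using FTT unfolding TT_def by auto
      have xF: "x \<in> F"
      proof (rule ccontr)
        assume xnF: "x \<notin> F"
        obtain G where G: "G \<in> T" "x \<in> G" "x \<notin> D G"
          using tower_point[OF sub fix0, of x] unfolding T_def by blast
        have "F \<subseteq> G \<or> G \<subseteq> D F" by (rule cmp[OF FT G(1)])
        then have FG: "F \<subset> G" using G(2) xnF sub[of F] by blast
        have GTT: "G \<in> TT" using G(1,2) unfolding TT_def by auto
        have "(G, 2) \<in> underS RR (F, 1)" using GTT FTT FG
          by (auto simp: underS_def RR_iff II_mem lexle_def)
        moreover have "x \<in> Aw (G, 2)" using G(3) by (simp add: Aw_def)
        ultimately show False using b3(2) bF k1 by blast
      qed
      show "x \<in> S" using xF xc closure_subset[of "F - S"] by blast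
    next
      fix x assume xS: "x \<in> S"
      obtain F where F: "F \<in> T" "x \<in> F" "x \<notin> D F"
        using tower_point[OF sub fix0, of x] unfolding T_def by blast
      have FTT: "F \<in> TT" using F unfolding TT_def by auto
      have bI: "(F, 1) \<in> Field RR" by (simp add: Field_RR II_mem FTT)
      have "x \<in> closure (F \<inter> S)" using F(2) xS closure_subset[of "F \<inter> S"] by blast
      then have "x \<notin> closure (F - S)" using F(2,3) unfolding D_def by blast
      then have xA: "x \<in> Aw (F, 1)" by (simp add: Aw_def)
      have "x \<notin> Aw c" if c: "c \<in> underS RR (F, 1)" for c
      proof -
        obtain G i where cG: "c = (G, i)" by (cases c)
        have GT: "G \<in> TT" and le: "lexle (G, i) (F, 1)" "(G, i) \<noteq> (F, 1)"
          using c cG by (auto simp: underS_def RR_iff II_mem)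
        show ?thesis
        proof (cases "G = F")
          case True
          then have "i = 0" using le by (auto simp: lexle_def)
          then show ?thesis using cG by (simp add: Aw_def)
        next
          case False
          then have FG: "F \<subset> G" using le by (auto simp: lexle_def)
          have GT': "G \<in> T" using GT unfolding TT_def by auto
          have "G \<subseteq> F \<or> F \<subseteq> D G" by (rule cmp[OF GT' F(1)])
          then have "F \<subseteq> D G" using FG by blast
          then have "x \<in> D G" using F(2) by blast
          moreover have "Aw (G, i) \<subseteq> - D G" unfolding Aw_def D_def by auto
          ultimately show ?thesis using cG by blast
        qed
      qed
      then have "x \<in> Aw (F, 1) - \<Union>(Aw ` underS RR (F, 1))" using xA by blast
      moreover have "(F, 1) \<in> ?X" using bI odd1[OF FTT] notodd by simp
      ultimately show "x \<in> (\<Union>b\<in>?X. Aw b - \<Union>(Aw ` underS RR b))" by blast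
    qed
    finally show ?thesis .
  qed
  have "Dop (dir_image RR g) A' = Dop RR (A' \<circ> g)" by (rule dir_Dop[OF inj])
  also have "\<dots> = Dop RR Aw" using Ag by (intro Dop_cong) (simp add: Field_RR)
  finally have "Dop (dir_image RR g) A' = S" using DopS by simp
  moreover have "\<forall>b\<in>Field (dir_image RR g). open (A' b)"
  proof
    fix b assume "b \<in> Field (dir_image RR g)"
    then obtain a where a: "a \<in> II" "b = g a" by (auto simp: dir_image_Field Field_RR)
    then show "open (A' b)" using Ag[OF a(1)] Aw_open[OF a(1)] by simp
  qed
  ultimately have "S \<in> Dclass (dir_image RR g)" unfolding Dclass_def by blast
  moreover have "Well_order (dir_image RR g)" using Well_order_dir_image[OF WO_RR inj] .
  ultimately show ?thesis by blast
qed


theorem theorem3p15: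
  assumes "\<And>(F :: 'a::second_countable_topology set) (G :: nat \<Rightarrow> 'a set).
             closed F \<Longrightarrow> (\<forall>n. G n \<in> Pi02 \<and> G n \<subseteq> F \<and> F \<subseteq> closure (G n))
             \<Longrightarrow> F \<subseteq> closure (\<Inter>n. G n)"
  shows "\<Union>{Dclass r | r :: nat rel. Well_order r} = (Delta02 :: 'a set set)"
proof (intro equalityI subsetI)
  fix X assume "X \<in> \<Union>{Dclass r | r :: nat rel. Well_order r}"
  then obtain r :: "nat rel" where r: "Well_order r" "X \<in> Dclass r" by blast
  then obtain A where A: "X = Dop r A" "\<forall>b\<in>Field r. open (A b)" unfolding Dclass_def by blast
  show "X \<in> Delta02" unfolding A(1) using r(1) A(2) by (rule Dclass_sub)
next
  fix X :: "'a set" assume X: "X \<in> Delta02"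
  have "\<exists>r::nat rel. Well_order r \<and> X \<in> Dclass r"
  proof (rule main_incl)
    fix F :: "'a set" assume "closed F" "F \<subseteq> closure (F \<inter> X)" "F \<subseteq> closure (F - X)"
    note bd = baire_Delta[OF assms X]
    show "F = {}" using bd \<open>closed F\<close> \<open>F \<subseteq> closure (F \<inter> X)\<close> \<open>F \<subseteq> closure (F - X)\<close> by metis
  qed
  then show "X \<in> \<Union>{Dclass r | r :: nat rel. Well_order r}" by blast
qed

end
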